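(* WL-powerful GNNs cannot, in general, distinguish a satisfiable residual formula from an unsatisfiable one even after $\Theta(n)$ variable assignments, where $n$ is the number of variables. Precisely: there is a constant $C>0$ such that for every integer $N\ge 4$ there exist 3-SAT formulas $f$ (satisfiable) and $\tilde f$ (unsatisfiable), each with at most $CN$ variables, such that for every partial assignment $\sigma$ of at most $\lfloor N/2\rfloor-1$ variables of $f$ there is a partial assignment $\tilde\sigma$ of variables of $\tilde f$ with $\mathrm{LCN}(\sigma(f))$ and $\mathrm{LCN}(\tilde\sigma(\tilde f))$ indistinguishable by the WL test; in particular, when $\sigma$ is the restriction of a satisfying assignment of $f$, the residual formula $\sigma(f)$ is satisfiable while $\tilde\sigma(\tilde f)$ is unsatisfiable, yet they are WL-indistinguishable.
   Context: A 3-SAT formula is a CNF formula (set of clauses, each a set of literals) with every clause of at most 3 literals. For a CNF formula $f$ on variables $x_1,\dots,x_n$, $\mathrm{LCN}(f)$ is the edge-colored graph with vertices the $2n$ literals $x_i,\neg x_i$ and one vertex per clause, a "literal-clause" edge $\{\ell,c\}$ whenever $\ell\in c$, and a differently colored "literal-literal" edge $\{x_i,\neg x_i\}$ for each $i$. For a partial assignment $\sigma$, $\sigma(f)$ denotes the residual formula and $\mathrm{LCN}(\sigma(f))$ is $\mathrm{LCN}(f)$ with literal vertices set true by $\sigma$ labeled $\top$, those set false labeled $\bot$, all others a default label. The WL test (color refinement) starts from the vertex labels and repeatedly replaces each vertex color by the pair (old color, for each edge color $c$ the multiset of old colors of neighbors via $c$-colored edges) until the partition stabilizes; run on the disjoint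 union of two graphs, they are indistinguishable iff every color occurs equally often in both. A WL-powerful GNN is one whose distinguishing power equals that of the WL test. *)

theory Defs
  imports Complex_Main "HOL-Library.Multiset"
begin

text \<open>Variables are natural numbers 0..n-1. A literal is a pair (i, p): (i, True) is x_i,
 (i, False) is the negation of x_i.\<close>

type_synonym lit = "nat \<times> bool"
type_synonym clause = "lit set"
type_synonym cnf = "nat \<times> clause set"

definition nvars :: "cnf \<Rightarrow> nat" where
  "nvars f = fst f"

definition clauses :: "cnf \<Rightarrow> clause set" where
  "clauses f = snd f"

definition wf_cnf :: "cnf \<Rightarrow> bool" where
  "wf_cnf f \<longleftrightarrow> finite (clauses f) \<and>
     (\<forall>c\<in>clauses f. \<forall>l\<in>c. fst l < nvars f)"

definition is_3sat :: "cnf \<Rightarrow> bool" where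
  "is_3sat f \<longleftrightarrow> wf_cnf f \<and> (\<forall>c\<in>clauses f. card c \<le> 3)"

definition satisfies :: "(nat \<Rightarrow> bool) \<Rightarrow> cnf \<Rightarrow> bool" where
  "satisfies \<tau> f \<longleftrightarrow> (\<forall>c\<in>clauses f. \<exists>l\<in>c. \<tau> (fst l) = snd l)"

definition satisfiable :: "cnf \<Rightarrow> bool" where
  "satisfiable f \<longleftrightarrow> (\<exists>\<tau>. satisfies \<tau> f)"

definition partial_assignment :: "cnf \<Rightarrow> (nat \<rightharpoonup> bool) \<Rightarrow> bool" where
  "partial_assignment f \<sigma> \<longleftrightarrow> dom \<sigma> \<subseteq> {..<nvars f}"

text \<open>The residual formula sigma(f) is satisfiable iff f has a satisfying assignment
  extending sigma.\<close>
definition residual_satisfiable :: "cnf \<Rightarrow> (nat \<rightharpoonup> bool) \<Rightarrow> bool" where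
  "residual_satisfiable f \<sigma> \<longleftrightarrow>
     (\<exists>\<tau>. (\<forall>i\<in>dom \<sigma>. \<sigma> i = Some (\<tau> i)) \<and> satisfies \<tau> f)"

text \<open>A graph is given by a vertex set V, a vertex labelling lab and, for every edge colour e,
  an (undirected) adjacency relation E e.\<close>

type_synonym ('v, 'l, 'e) lgraph = "'v set \<times> ('v \<Rightarrow> 'l) \<times> ('e \<Rightarrow> 'v \<Rightarrow> 'v \<Rightarrow> bool)"

text \<open>wl_eq V lab E k u v: u and v receive the same colour after k rounds of colour refinement.
  A colour class is represented by the set of vertices in it; the new colour of u is its old
  colour together with, for each edge colour e, the multiset of old colours of its
  e-neighbours.\<close>
fun wl_eq :: "'v set \<Rightarrow> ('v \<Rightarrow> 'l) \<Rightarrow> ('e \<Rightarrow> 'v \<Rightarrow> 'v \<Rightarrow> bool) \<Rightarrow> nat \<Rightarrow> 'v \<Rightarrow> 'v \<Rightarrow> bool" where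
  "wl_eq V lab E 0 u v = (lab u = lab v)"
| "wl_eq V lab E (Suc k) u v =
     (wl_eq V lab E k u v \<and>
      (\<forall>e. image_mset (\<lambda>w. {z\<in>V. wl_eq V lab E k w z}) (mset_set {w\<in>V. E e u w}) =
           image_mset (\<lambda>w. {z\<in>V. wl_eq V lab E k w z}) (mset_set {w\<in>V. E e v w})))"

definition disj_union :: "('v, 'l, 'e) lgraph \<Rightarrow> ('w, 'l, 'e) lgraph \<Rightarrow> ('v + 'w, 'l, 'e) lgraph" where
  "disj_union G H = (case G of (V1, l1, E1) \<Rightarrow> case H of (V2, l2, E2) \<Rightarrow>
     (Inl ` V1 \<union> Inr ` V2, case_sum l1 l2,
      \<lambda>e a b. (case (a, b) of (Inl x, Inl y) \<Rightarrow> E1 e x y | (Inr x, Inr y) \<Rightarrow> E2 e x y | _ \<Rightarrow> False)))"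

text \<open>Two graphs are WL-indistinguishable iff, running colour refinement on their disjoint
  union, every colour occurs equally often in both graphs. Since the partitions only get
  finer, requiring this for every round k is the same as requiring it for the stable
  partition.\<close>
definition wl_indist :: "('v, 'l, 'e) lgraph \<Rightarrow> ('w, 'l, 'e) lgraph \<Rightarrow> bool" where
  "wl_indist G H \<longleftrightarrow> (case disj_union G H of (V, lab, E) \<Rightarrow>
     (\<forall>k. \<forall>u\<in>V.
        card {x\<in>fst G. wl_eq V lab E k (Inl x) u} = card {y\<in>fst H. wl_eq V lab E k (Inr y) u}))"

datatype vlabel = LTop | LBot | LDefault

text \<open>Edge colours: True = literal-clause edge, False = literal-literal edge.\<close>
type_synonym lcn_vertex = "lit + clause"

definition LCN :: "cnf \<Rightarrow> (nat \<rightharpoonup> bool) \<Rightarrow> (lcn_vertex, vlabel, bool) lgraph" where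
  "LCN f \<sigma> =
    (Inl ` ({..<nvars f} \<times> UNIV) \<union> Inr ` clauses f,
     (\<lambda>a. case a of
            Inl (i, p) \<Rightarrow> (case \<sigma> i of None \<Rightarrow> LDefault
                                   | Some q \<Rightarrow> (if q = p then LTop else LBot))
          | Inr _ \<Rightarrow> LDefault),
     (\<lambda>e a b. if e then
                 (case (a, b) of (Inl l, Inr c) \<Rightarrow> l \<in> c | (Inr c, Inl l) \<Rightarrow> l \<in> c | _ \<Rightarrow> False)
               else
                 (case (a, b) of (Inl (i, p), Inl (j, q)) \<Rightarrow> i = j \<and> p \<noteq> q | _ \<Rightarrow> False)))"

end

theory Submission
  imports Defs
begin


lemma wl_eq_refl: "wl_eq V lab E k u u"
  by (induction k) auto

lemma wl_eq_sym: "wl_eq V lab E k u v \<Longrightarrow> wl_eq V lab E k v u"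
  by (induction k) auto

lemma wl_eq_trans: "wl_eq V lab E k u v \<Longrightarrow> wl_eq V lab E k v w \<Longrightarrow> wl_eq V lab E k u w"
  by (induction k) auto

lemma stable_col:
  assumes lab_ok: "\<And>u. u \<in> V \<Longrightarrow> lab u = \<Lambda> (col u)"
    and nb_ok: "\<And>u e. u \<in> V \<Longrightarrow> image_mset col (mset_set {w\<in>V. E e u w}) = Nb e (col u)"
  shows "u \<in> V \<Longrightarrow> v \<in> V \<Longrightarrow> col u = col v \<Longrightarrow> wl_eq V lab E k u v"
proof (induction k arbitrary: u v)
  case 0
  then show ?case using lab_ok by simp
next
  case (Suc k)
  define cls where "cls = (\<lambda>w. {z\<in>V. wl_eq V lab E k w z})"
  define h where "h = (\<lambda>c. cls (SOME w. w \<in> V \<and> col w = c))"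
  have hcls: "cls w = h (col w)" if "w \<in> V" for w
  proof -
    have ex: "\<exists>w'. w' \<in> V \<and> col w' = col w" using that by blast
    define w' where "w' = (SOME w'. w' \<in> V \<and> col w' = col w)"
    have w': "w' \<in> V" "col w' = col w" using someI_ex[OF ex] unfolding w'_def by auto
    have "wl_eq V lab E k w w'" using Suc.IH[OF that w'(1)] w'(2) by simp
    hence "cls w = cls w'" unfolding cls_def
      by (intro Collect_cong conj_cong refl) (meson wl_eq_trans wl_eq_sym)
    thus ?thesis unfolding h_def w'_def by simp
  qed
  have img: "image_mset cls (mset_set {w\<in>V. E e x w}) = image_mset h (Nb e (col x))"
    if "x \<in> V" for x e
  proof -
    have "image_mset cls (mset_set {w\<in>V. E e x w}) = image_mset (h \<circ> col) (mset_set {w\<in>V. E e x w})"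
    proof (rule image_mset_cong)
      fix w assume "w \<in># mset_set {w\<in>V. E e x w}"
      hence "w \<in> V"
        by (cases "finite {w\<in>V. E e x w}") auto
      thus "cls w = (h \<circ> col) w" using hcls by simp
    qed
    also have "\<dots> = image_mset h (image_mset col (mset_set {w\<in>V. E e x w}))"
      by (simp add: image_mset.compositionality)
    finally show ?thesis using nb_ok[OF that] by simp
  qed
  show ?case
    using Suc.IH[OF Suc.prems] img[OF Suc.prems(1)] img[OF Suc.prems(2)] Suc.prems(3)
    by (simp add: cls_def)
qed

lemma wl_indist_col:
  fixes colG :: "'v \<Rightarrow> 'c" and colH :: "'w \<Rightarrow> 'c"
  assumes G: "G = (V1, l1, E1)" and H: "H = (V2, l2, E2)"
    and lab1: "\<And>x. x \<in> V1 \<Longrightarrow> l1 x = \<Lambda> (colG x)"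
    and lab2: "\<And>x. x \<in> V2 \<Longrightarrow> l2 x = \<Lambda> (colH x)"
    and nb1: "\<And>x e. x \<in> V1 \<Longrightarrow> image_mset colG (mset_set {w\<in>V1. E1 e x w}) = Nb e (colG x)"
    and nb2: "\<And>x e. x \<in> V2 \<Longrightarrow> image_mset colH (mset_set {w\<in>V2. E2 e x w}) = Nb e (colH x)"
    and cnt: "\<And>S. card {x\<in>V1. colG x \<in> S} = card {y\<in>V2. colH y \<in> S}"
  shows "wl_indist G H"
proof -
  define V where "V = Inl ` V1 \<union> Inr ` V2"
  define lab where "lab = case_sum l1 l2"
  define E where "E = (\<lambda>e a b. (case (a, b) of (Inl x, Inl y) \<Rightarrow> E1 e x y | (Inr x, Inr y) \<Rightarrow> E2 e x y | _ \<Rightarrow> False))"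
  define col where "col = case_sum colG colH"
  have du: "disj_union G H = (V, lab, E)"
    unfolding G H disj_union_def V_def lab_def E_def by simp
  have labok: "lab u = \<Lambda> (col u)" if "u \<in> V" for u
    using that lab1 lab2 unfolding V_def lab_def col_def by auto
  have nbok: "image_mset col (mset_set {w\<in>V. E e u w}) = Nb e (col u)" if "u \<in> V" for u e
  proof -
    from that consider (l) x where "u = Inl x" "x \<in> V1" | (r) y where "u = Inr y" "y \<in> V2"
      unfolding V_def by blast
    then show ?thesis
    proof cases
      case l
      have "{w\<in>V. E e u w} = Inl ` {w\<in>V1. E1 e x w}"
        unfolding V_def E_def l by (rule set_eqI, rename_tac zz, case_tac zz) (auto split: sum.splits)
      hence "mset_set {w\<in>V. E e u w} = image_mset Inl (mset_set {w\<in>V1. E1 e x w})"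
        by (simp add: image_mset_mset_set)
      thus ?thesis using nb1[OF l(2)] by (simp add: l col_def image_mset.compositionality comp_def)
    next
      case r
      have "{w\<in>V. E e u w} = Inr ` {w\<in>V2. E2 e y w}"
        unfolding V_def E_def r by (rule set_eqI, rename_tac zz, case_tac zz) (auto split: sum.splits)
      hence "mset_set {w\<in>V. E e u w} = image_mset Inr (mset_set {w\<in>V2. E2 e y w})"
        by (simp add: image_mset_mset_set)
      thus ?thesis using nb2[OF r(2)] by (simp add: r col_def image_mset.compositionality comp_def)
    qed
  qed
  note st = stable_col[of V lab \<Lambda> col E Nb, OF labok nbok]
  show ?thesis
    unfolding wl_indist_def du
  proof (simp, intro allI ballI)
    fix k u assume u: "u \<in> V"
    define S where "S = {c. \<exists>z\<in>V. col z = c \<and> wl_eq V lab E k z u}"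
    have a: "{x\<in>V1. wl_eq V lab E k (Inl x) u} = {x\<in>V1. colG x \<in> S}"
    proof (intro set_eqI iffI)
      fix x assume "x \<in> {x\<in>V1. wl_eq V lab E k (Inl x) u}"
      thus "x \<in> {x\<in>V1. colG x \<in> S}" unfolding S_def V_def col_def by force
    next
      fix x assume x: "x \<in> {x\<in>V1. colG x \<in> S}"
      then obtain z where z: "z \<in> V" "col z = colG x" "wl_eq V lab E k z u" unfolding S_def by auto
      have "Inl x \<in> V" using x V_def by auto
      hence "wl_eq V lab E k (Inl x) z" using st z by (simp add: col_def)
      thus "x \<in> {x\<in>V1. wl_eq V lab E k (Inl x) u}" using x wl_eq_trans[OF _ z(3)] by simp
    qed
    have b: "{x\<in>V2. wl_eq V lab E k (Inr x) u} = {x\<in>V2. colH x \<in> S}"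
    proof (intro set_eqI iffI)
      fix x assume "x \<in> {x\<in>V2. wl_eq V lab E k (Inr x) u}"
      thus "x \<in> {x\<in>V2. colH x \<in> S}" unfolding S_def V_def col_def by force
    next
      fix x assume x: "x \<in> {x\<in>V2. colH x \<in> S}"
      then obtain z where z: "z \<in> V" "col z = colH x" "wl_eq V lab E k z u" unfolding S_def by auto
      have "Inr x \<in> V" using x V_def by auto
      hence "wl_eq V lab E k (Inr x) z" using st z by (simp add: col_def)
      thus "x \<in> {x\<in>V2. wl_eq V lab E k (Inr x) u}" using x wl_eq_trans[OF _ z(3)] by simp
    qed
    show "card {x \<in> fst G. wl_eq V lab E k (Inl x) u} = card {y \<in> fst H. wl_eq V lab E k (Inr y) u}"
      using a b cnt G H by simp
  qed
qed



definition A0 :: "clause set" where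
  "A0 = {{(0,True),(0,False)}, {(0,False),(1,True)}, {(1,True),(1,False)}, {(1,False),(0,True)}}"
definition B0 :: "clause set" where
  "B0 = {{(0,True),(1,True)}, {(0,True),(1,False)}, {(0,False),(1,True)}, {(0,False),(1,False)}}"

definition shl :: "nat \<Rightarrow> lit \<Rightarrow> lit" where "shl j l = (2*j + fst l, snd l)"
definition sh :: "nat \<Rightarrow> clause \<Rightarrow> clause" where "sh j c = shl j ` c"

definition gcl :: "(nat \<Rightarrow> bool) \<Rightarrow> nat \<Rightarrow> clause set" where
  "gcl \<beta> j = (if \<beta> j then B0 else A0)"

definition fam :: "nat \<Rightarrow> (nat \<Rightarrow> bool) \<Rightarrow> cnf" where
  "fam M \<beta> = (2*M, \<Union>j<M. sh j ` gcl \<beta> j)"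

definition untouched :: "(nat \<rightharpoonup> bool) \<Rightarrow> nat \<Rightarrow> bool" where
  "untouched \<sigma> j \<longleftrightarrow> \<sigma> (2*j) = None \<and> \<sigma> (2*j+1) = None"

datatype col = UL | UC | TL nat bool "bool option" "bool option" | TC clause "bool option" "bool option"

definition gad :: "clause \<Rightarrow> nat" where "gad c = fst (SOME l. l \<in> c) div 2"
definition loc :: "clause \<Rightarrow> clause" where "loc c = (\<lambda>l. (fst l mod 2, snd l)) ` c"

fun colV :: "(nat \<rightharpoonup> bool) \<Rightarrow> lcn_vertex \<Rightarrow> col" where
  "colV \<sigma> (Inl (i,p)) = (if untouched \<sigma> (i div 2) then UL
      else TL (i mod 2) p (\<sigma> (2*(i div 2))) (\<sigma> (2*(i div 2)+1)))"
| "colV \<sigma> (Inr c) = (if untouched \<sigma> (gad c) then UC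
      else TC (loc c) (\<sigma> (2*gad c)) (\<sigma> (2*gad c+1)))"

definition kap :: "(nat \<rightharpoonup> bool) \<Rightarrow> nat \<Rightarrow> clause \<Rightarrow> col" where
  "kap \<sigma> j c0 = (if untouched \<sigma> j then UC else TC c0 (\<sigma> (2*j)) (\<sigma> (2*j+1)))"

fun lblF :: "col \<Rightarrow> vlabel" where
  "lblF (TL r p a b) = (case (if r = 0 then a else b) of None \<Rightarrow> LDefault
        | Some q \<Rightarrow> (if q = p then LTop else LBot))"
| "lblF _ = LDefault"

fun Nb :: "bool \<Rightarrow> col \<Rightarrow> col multiset" where
  "Nb True UL = {#UC, UC#}"
| "Nb False UL = {#UL#}"
| "Nb True UC = {#UL, UL#}"
| "Nb False UC = {#}"
| "Nb True (TL r p a b) = image_mset (\<lambda>c0. TC c0 a b) (mset_set {c0\<in>A0. (r,p)\<in>c0})"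
| "Nb False (TL r p a b) = {#TL r (\<not>p) a b#}"
| "Nb True (TC c0 a b) = image_mset (\<lambda>l. TL (fst l) (snd l) a b) (mset_set c0)"
| "Nb False (TC c0 a b) = {#}"

definition good :: "clause \<Rightarrow> bool" where
  "good c0 \<longleftrightarrow> c0 \<noteq> {} \<and> (\<forall>l\<in>c0. fst l < 2) \<and> card c0 = 2 \<and> finite c0"

lemma good_AB: "c0 \<in> A0 \<Longrightarrow> good c0" "c0 \<in> B0 \<Longrightarrow> good c0"
  by (auto simp: A0_def B0_def good_def)

lemma good_gcl: "c0 \<in> gcl \<beta> j \<Longrightarrow> good c0"
  by (auto simp: gcl_def good_AB split: if_splits)

lemma d1: "(r::nat) < 2 \<Longrightarrow> (2*j + r) div 2 = j" by simp
lemma d2: "(r::nat) < 2 \<Longrightarrow> (2*j + r) mod 2 = r" by simp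
lemma mem_sh: "good c0 \<Longrightarrow> (i,p) \<in> sh j c0 \<longleftrightarrow> i div 2 = j \<and> (i mod 2, p) \<in> c0"
proof
  assume g: "good c0" and "(i,p) \<in> sh j c0"
  then obtain l where l: "l \<in> c0" "(i,p) = shl j l" unfolding sh_def by blast
  have r2: "fst l < 2" using g l(1) unfolding good_def by blast
  have ip: "i = 2*j + fst l" "p = snd l" using l(2) unfolding shl_def by simp_all
  have "i div 2 = j" unfolding ip(1) using d1[OF r2] .
  moreover have "(i mod 2, p) = l" unfolding ip using d2[OF r2] by simp
  ultimately show "i div 2 = j \<and> (i mod 2, p) \<in> c0" using l(1) by simp
next
  assume g: "good c0" and h: "i div 2 = j \<and> (i mod 2, p) \<in> c0"
  have i2: "2*(i div 2) + i mod 2 = i" by (rule mult_div_mod_eq)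
  have hj: "i div 2 = j" using h by blast
  have "2*j + i mod 2 = i" using i2 unfolding hj .
  hence "(i,p) = shl j (i mod 2, p)" unfolding shl_def by simp
  thus "(i,p) \<in> sh j c0" unfolding sh_def using h by blast
qed

lemma gad_sh: "good c0 \<Longrightarrow> gad (sh j c0) = j"
proof -
  assume g: "good c0"
  have "\<exists>l. l \<in> sh j c0" using g unfolding good_def sh_def by blast
  hence "(SOME l. l \<in> sh j c0) \<in> sh j c0" by (rule someI_ex)
  moreover obtain i p where ip: "(SOME l. l \<in> sh j c0) = (i,p)" by (cases "SOME l. l \<in> sh j c0")
  ultimately have "i div 2 = j" using mem_sh[OF g] by simp
  thus ?thesis unfolding gad_def ip by simp
qed

lemma loc_sh: "good c0 \<Longrightarrow> loc (sh j c0) = c0"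
proof -
  assume g: "good c0"
  have "\<And>l. l \<in> c0 \<Longrightarrow> (\<lambda>l. (fst l mod 2, snd l)) (shl j l) = l"
  proof -
    fix l assume "l \<in> c0"
    hence "fst l < 2" using g unfolding good_def by blast
    thus "(\<lambda>l. (fst l mod 2, snd l)) (shl j l) = l" unfolding shl_def using d2 by simp
  qed
  hence "(\<lambda>l. (fst l mod 2, snd l)) ` shl j ` c0 = id ` c0"
    unfolding image_image by (intro image_cong) auto
  thus ?thesis unfolding loc_def sh_def by simp
qed

lemma inj_shl: "inj (shl j)" by (auto simp: inj_def shl_def prod_eq_iff)
lemma inj_sh: "inj (sh j)" unfolding sh_def using inj_shl by (simp add: inj_def inj_image_eq_iff)

lemma colV_sh: "good c0 \<Longrightarrow> colV \<sigma> (Inr (sh j c0)) = kap \<sigma> j c0"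
  by (simp only: colV.simps gad_sh loc_sh kap_def)

lemma A0_f:
  "{c0\<in>A0. (0,True)\<in>c0} = {{(0,True),(0,False)}, {(1,False),(0,True)}}"
  "{c0\<in>A0. (0,False)\<in>c0} = {{(0,True),(0,False)}, {(0,False),(1,True)}}"
  "{c0\<in>A0. (1,True)\<in>c0} = {{(0,False),(1,True)}, {(1,True),(1,False)}}"
  "{c0\<in>A0. (1,False)\<in>c0} = {{(1,True),(1,False)}, {(1,False),(0,True)}}"
  by (auto simp: A0_def)

lemma card2: "x \<in> a \<Longrightarrow> x \<notin> b \<Longrightarrow> card {a, b} = 2" by (subgoal_tac "a \<noteq> b") auto
lemma cnt_A0: "r < 2 \<Longrightarrow> card {c0\<in>A0. (r,p)\<in>c0} = 2"
proof -
  assume "r < 2"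
  hence "r = 0 \<or> r = 1" by auto
  moreover have "card {c0\<in>A0. (0,True)\<in>c0} = 2" unfolding A0_f
    by (rule card2[where x="(0,False)"]) simp_all
  moreover have "card {c0\<in>A0. (0,False)\<in>c0} = 2" unfolding A0_f
    by (rule card2[where x="(0,True)"]) simp_all
  moreover have "card {c0\<in>A0. (1,True)\<in>c0} = 2" unfolding A0_f
    by (rule card2[where x="(0,False)"]) simp_all
  moreover have "card {c0\<in>A0. (1,False)\<in>c0} = 2" unfolding A0_f
    by (rule card2[where x="(1,True)"]) simp_all
  ultimately show ?thesis by (cases p) auto
qed

lemma B0_f:
  "{c0\<in>B0. (0,True)\<in>c0} = {{(0,True),(1,True)}, {(0,True),(1,False)}}"
  "{c0\<in>B0. (0,False)\<in>c0} = {{(0,False),(1,True)}, {(0,False),(1,False)}}"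
  "{c0\<in>B0. (1,True)\<in>c0} = {{(0,True),(1,True)}, {(0,False),(1,True)}}"
  "{c0\<in>B0. (1,False)\<in>c0} = {{(0,True),(1,False)}, {(0,False),(1,False)}}"
  by (auto simp: B0_def)

lemma cnt_B0: "r < 2 \<Longrightarrow> card {c0\<in>B0. (r,p)\<in>c0} = 2"
proof -
  assume "r < 2"
  hence "r = 0 \<or> r = 1" by auto
  moreover have "card {c0\<in>B0. (0,True)\<in>c0} = 2" unfolding B0_f
    by (rule card2[where x="(1,True)"]) simp_all
  moreover have "card {c0\<in>B0. (0,False)\<in>c0} = 2" unfolding B0_f
    by (rule card2[where x="(1,True)"]) simp_all
  moreover have "card {c0\<in>B0. (1,True)\<in>c0} = 2" unfolding B0_f
    by (rule card2[where x="(0,True)"]) simp_all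
  moreover have "card {c0\<in>B0. (1,False)\<in>c0} = 2" unfolding B0_f
    by (rule card2[where x="(0,True)"]) simp_all
  ultimately show ?thesis by (cases p) auto
qed

lemma cnt_gcl: "r < 2 \<Longrightarrow> card {c0\<in>gcl \<beta> j. (r,p)\<in>c0} = 2"
  by (simp add: gcl_def cnt_A0 cnt_B0)

definition VV :: "cnf \<Rightarrow> lcn_vertex set" where
  "VV f = Inl ` ({..<nvars f} \<times> UNIV) \<union> Inr ` clauses f"
definition labL :: "(nat \<rightharpoonup> bool) \<Rightarrow> lcn_vertex \<Rightarrow> vlabel" where
  "labL \<sigma> = (\<lambda>a. case a of
            Inl (i, p) \<Rightarrow> (case \<sigma> i of None \<Rightarrow> LDefault
                                   | Some q \<Rightarrow> (if q = p then LTop else LBot))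
          | Inr _ \<Rightarrow> LDefault)"
definition EE :: "bool \<Rightarrow> lcn_vertex \<Rightarrow> lcn_vertex \<Rightarrow> bool" where
  "EE = (\<lambda>e a b. if e then
                 (case (a, b) of (Inl l, Inr c) \<Rightarrow> l \<in> c | (Inr c, Inl l) \<Rightarrow> l \<in> c | _ \<Rightarrow> False)
               else
                 (case (a, b) of (Inl (i, p), Inl (j, q)) \<Rightarrow> i = j \<and> p \<noteq> q | _ \<Rightarrow> False))"

lemma LCN_split: "LCN f \<sigma> = (VV f, labL \<sigma>, EE)"
  unfolding LCN_def VV_def labL_def EE_def by (rule refl)

lemma nbr_litF: "i < nvars f \<Longrightarrow> {w\<in>VV f. EE False (Inl (i,p)) w} = {Inl (i, \<not>p)}"
  unfolding VV_def EE_def by (rule set_eqI, rename_tac zz, case_tac zz) auto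

lemma nbr_litT: "{w\<in>VV f. EE True (Inl l) w} = Inr ` {c\<in>clauses f. l \<in> c}"
  unfolding VV_def EE_def by (rule set_eqI, rename_tac zz, case_tac zz) auto

lemma nbr_clF: "{w\<in>VV f. EE False (Inr c) w} = {}"
  unfolding VV_def EE_def by (rule set_eqI, rename_tac zz, case_tac zz) auto

lemma nbr_clT: "wf_cnf f \<Longrightarrow> c \<in> clauses f \<Longrightarrow> {w\<in>VV f. EE True (Inr c) w} = Inl ` c"
proof (rule set_eqI)
  fix zz assume wf: "wf_cnf f" and c: "c \<in> clauses f"
  show "zz \<in> {w\<in>VV f. EE True (Inr c) w} \<longleftrightarrow> zz \<in> Inl ` c"
  proof (cases zz)
    case (Inl l)
    have "l \<in> c \<Longrightarrow> fst l < nvars f" using wf c unfolding wf_cnf_def by blast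
    hence "l \<in> c \<Longrightarrow> l \<in> {..<nvars f} \<times> UNIV" by (cases l) auto
    thus ?thesis unfolding VV_def EE_def Inl by (simp add: inj_image_mem_iff) blast
  next
    case (Inr b)
    thus ?thesis unfolding VV_def EE_def by auto
  qed
qed

lemma nvars_fam: "nvars (fam M \<beta>) = 2*M" by (simp add: fam_def nvars_def)
lemma clauses_fam: "clauses (fam M \<beta>) = (\<Union>j<M. sh j ` gcl \<beta> j)" by (simp add: fam_def clauses_def)

lemma wf_fam: "wf_cnf (fam M \<beta>)"
  unfolding wf_cnf_def nvars_fam clauses_fam
proof (intro conjI ballI)
  show "finite (\<Union>j<M. sh j ` gcl \<beta> j)"
    by (intro finite_UN_I finite_imageI; simp add: gcl_def A0_def B0_def)
next
  fix c l assume c: "c \<in> (\<Union>j<M. sh j ` gcl \<beta> j)" and l: "l \<in> c"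
  then obtain j c0 where j: "j < M" "c0 \<in> gcl \<beta> j" "c = sh j c0" by auto
  have g: "good c0" using good_gcl j by blast
  obtain i p where ip: "l = (i,p)" by (cases l)
  have "i div 2 = j" using mem_sh[OF g, of i p j] l ip j(3) by blast
  hence "i < 2*M" using j(1) by presburger
  thus "fst l < 2*M" using ip by simp
qed

lemma fam_cls_lit: assumes iM: "i div 2 < M" shows "{c\<in>clauses (fam M \<beta>). (i,p) \<in> c} =
    sh (i div 2) ` {c0\<in>gcl \<beta> (i div 2). (i mod 2, p) \<in> c0}"
proof (intro set_eqI iffI)
  fix c assume "c \<in> {c\<in>clauses (fam M \<beta>). (i,p) \<in> c}"
  then obtain j c0 where j: "j < M" "c0 \<in> gcl \<beta> j" "c = sh j c0" and ip: "(i,p) \<in> c"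
    by (auto simp: clauses_fam)
  have g: "good c0" using good_gcl j by blast
  have "i div 2 = j \<and> (i mod 2, p) \<in> c0" using mem_sh[OF g] ip j by blast
  thus "c \<in> sh (i div 2) ` {c0\<in>gcl \<beta> (i div 2). (i mod 2, p) \<in> c0}" using j by blast
next
  fix c assume "c \<in> sh (i div 2) ` {c0\<in>gcl \<beta> (i div 2). (i mod 2, p) \<in> c0}"
  then obtain c0 where c0: "c0 \<in> gcl \<beta> (i div 2)" "(i mod 2, p) \<in> c0" "c = sh (i div 2) c0" by blast
  have g: "good c0" using good_gcl c0 by blast
  have "(i,p) \<in> c" using mem_sh[OF g] c0 by blast
  moreover have "c \<in> clauses (fam M \<beta>)" unfolding clauses_fam using iM c0 by blast
  ultimately show "c \<in> {c\<in>clauses (fam M \<beta>). (i,p) \<in> c}" by blast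
qed



lemma colV_lit: "r < 2 \<Longrightarrow> colV \<sigma> (Inl (2*j + r, p)) =
   (if untouched \<sigma> j then UL else TL r p (\<sigma> (2*j)) (\<sigma> (2*j+1)))"
  by simp

lemma lab_fam: "x \<in> VV f \<Longrightarrow> labL \<sigma> x = lblF (colV \<sigma> x)"
proof -
  assume x: "x \<in> VV f"
  show ?thesis
  proof (cases x)
    case (Inl l)
    obtain i p where l: "l = (i,p)" by (cases l)
    have "i mod 2 = 0 \<or> i mod 2 = 1" by auto
    then show ?thesis
    proof
      assume m: "i mod 2 = 0"
      hence "even i" by presburger
      then obtain j where ij: "i = 2*j" by (rule evenE)
      show ?thesis unfolding Inl l ij labL_def
        by (auto simp: untouched_def split: option.splits)
    next
      assume m: "i mod 2 = 1"
      hence "odd i" by presburger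
      then obtain j where ij: "i = 2*j+1" by (rule oddE)
      show ?thesis unfolding Inl l ij labL_def
        by (auto simp: untouched_def split: option.splits)
    qed
  next
    case (Inr c)
    thus ?thesis by (simp add: labL_def)
  qed
qed

lemma mset_img_const: "image_mset (\<lambda>_. a) M = replicate_mset (size M) a"
  by (induction M) auto

lemma nb_fam:
  assumes bu: "\<And>j. \<beta> j \<Longrightarrow> untouched \<sigma> j" and x: "x \<in> VV (fam M \<beta>)"
  shows "image_mset (colV \<sigma>) (mset_set {w\<in>VV (fam M \<beta>). EE e x w}) = Nb e (colV \<sigma> x)"
proof (cases x)
  case (Inl l)
  obtain i p where l: "l = (i,p)" by (cases l)
  have i: "i < 2*M" using x Inl l by (auto simp: VV_def nvars_fam)
  define j where "j = i div 2"
  define r where "r = i mod 2"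
  have r2: "r < 2" unfolding r_def by simp
  have ijr: "i = 2*j + r" unfolding j_def r_def by simp
  have jM: "j < M" using i unfolding j_def by simp
  show ?thesis
  proof (cases e)
    case False
    have "{w\<in>VV (fam M \<beta>). EE e x w} = {Inl (i, \<not>p)}"
      using nbr_litF[of i "fam M \<beta>" p] i False Inl l by (simp add: nvars_fam)
    thus ?thesis using False Inl l ijr r2 colV_lit[OF r2, of \<sigma> j] by (simp del: colV.simps)
  next
    case True
    define S where "S = {c0\<in>gcl \<beta> j. (r, p) \<in> c0}"
    have fS: "finite S" unfolding S_def gcl_def A0_def B0_def by auto
    have gS: "\<And>c0. c0 \<in> S \<Longrightarrow> good c0" unfolding S_def using good_gcl by blast
    have "{w\<in>VV (fam M \<beta>). EE e x w} = (Inr \<circ> sh j) ` S"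
      using nbr_litT[of "fam M \<beta>" l] fam_cls_lit[of i M \<beta> p] True Inl l jM
      unfolding S_def j_def r_def by (simp add: image_comp)
    hence "mset_set {w\<in>VV (fam M \<beta>). EE e x w} = image_mset (Inr \<circ> sh j) (mset_set S)"
      using inj_sh[of j] by (simp add: image_mset_mset_set inj_on_def inj_def)
    hence eq: "image_mset (colV \<sigma>) (mset_set {w\<in>VV (fam M \<beta>). EE e x w}) = image_mset (kap \<sigma> j) (mset_set S)"
      by (simp add: image_mset.compositionality) (rule image_mset_cong, simp del: colV.simps add: colV_sh gS fS)
    have cS: "card S = 2" unfolding S_def using cnt_gcl r2 by blast
    show ?thesis
    proof (cases "untouched \<sigma> j")
      case True
      hence "image_mset (kap \<sigma> j) (mset_set S) = image_mset (\<lambda>_. UC) (mset_set S)"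
        by (intro image_mset_cong) (simp add: kap_def)
      also have "\<dots> = {#UC, UC#}" using cS fS by (simp add: mset_img_const numeral_2_eq_2)
      finally show ?thesis using eq True \<open>e\<close> Inl l ijr r2 colV_lit[OF r2, of \<sigma> j] by (simp del: colV.simps)
    next
      case False
      hence gA: "gcl \<beta> j = A0" using bu by (auto simp: gcl_def)
      have "image_mset (kap \<sigma> j) (mset_set S) = image_mset (\<lambda>c0. TC c0 (\<sigma> (2*j)) (\<sigma> (2*j+1))) (mset_set S)"
        using False by (intro image_mset_cong) (simp add: kap_def)
      thus ?thesis using eq False \<open>e\<close> Inl l ijr r2 colV_lit[OF r2, of \<sigma> j] gA
        by (simp del: colV.simps add: S_def)
    qed
  qed
next
  case (Inr c)
  have c: "c \<in> clauses (fam M \<beta>)" using x Inr by (auto simp: VV_def)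
  then obtain j c0 where j: "j < M" "c0 \<in> gcl \<beta> j" "c = sh j c0" by (auto simp: clauses_fam)
  have g: "good c0" using good_gcl j by blast
  have fc: "finite c0" "card c0 = 2" and c2: "\<And>l. l \<in> c0 \<Longrightarrow> fst l < 2" using g by (auto simp: good_def)
  have cx: "colV \<sigma> x = kap \<sigma> j c0" using Inr j colV_sh g by simp
  show ?thesis
  proof (cases e)
    case False
    have "{w\<in>VV (fam M \<beta>). EE e x w} = {}" using False Inr nbr_clF[of "fam M \<beta>" c] by simp
    hence "mset_set {w\<in>VV (fam M \<beta>). EE e x w} = {#}" by (simp only: mset_set.empty)
    thus ?thesis using False cx by (cases "untouched \<sigma> j") (simp_all del: colV.simps add: kap_def)
  next
    case True
    have E1: "{w\<in>VV (fam M \<beta>). EE e x w} = (Inl \<circ> shl j) ` c0"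
      using nbr_clT[OF wf_fam c] True Inr j by (simp add: sh_def image_comp)
    have I1: "inj_on (Inl \<circ> shl j) c0" using inj_shl[of j] by (metis comp_inj_on inj_Inl inj_on_subset subset_UNIV)
    have "mset_set {w\<in>VV (fam M \<beta>). EE e x w} = image_mset (Inl \<circ> shl j) (mset_set c0)"
      unfolding E1 by (rule image_mset_mset_set[OF I1, symmetric])
    hence eq: "image_mset (colV \<sigma>) (mset_set {w\<in>VV (fam M \<beta>). EE e x w}) =
        image_mset (\<lambda>l. if untouched \<sigma> j then UL else TL (fst l) (snd l) (\<sigma> (2*j)) (\<sigma> (2*j+1))) (mset_set c0)"
      apply (simp add: image_mset.compositionality)
      apply (rule image_mset_cong)
      using c2 fc by (auto simp: shl_def)
    show ?thesis
    proof (cases "untouched \<sigma> j")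
      case True
      thus ?thesis using eq cx fc \<open>e\<close> by (simp add: kap_def mset_img_const numeral_2_eq_2)
    next
      case False
      thus ?thesis using eq cx \<open>e\<close> by (simp add: kap_def)
    qed
  qed
qed



lemma cA0: "card A0 = 4" by (simp add: A0_def doubleton_eq_iff)
lemma cB0: "card B0 = 4" by (simp add: B0_def doubleton_eq_iff)

definition swg :: "nat \<Rightarrow> nat \<Rightarrow> nat" where
  "swg j0 j = (if j = 0 then j0 else if j = j0 then 0 else j)"
definition sw :: "nat \<Rightarrow> nat \<Rightarrow> nat" where
  "sw j0 i = 2 * swg j0 (i div 2) + i mod 2"

lemma swg_inv: "swg j0 (swg j0 j) = j" by (simp add: swg_def)
lemma swg_lt: "j0 < M \<Longrightarrow> j < M \<Longrightarrow> swg j0 j < M" by (simp add: swg_def)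

lemma sw_div: "sw j0 i div 2 = swg j0 (i div 2)"
  unfolding sw_def by (rule d1) simp
lemma sw_mod: "sw j0 i mod 2 = i mod 2"
  unfolding sw_def by (rule d2) simp
lemma sw_inv: "sw j0 (sw j0 i) = i"
proof -
  have "sw j0 (sw j0 i) = 2 * swg j0 (swg j0 (i div 2)) + i mod 2"
    unfolding sw_def[of j0 "sw j0 i"] sw_div sw_mod ..
  also have "\<dots> = i" unfolding swg_inv by (rule mult_div_mod_eq)
  finally show ?thesis .
qed
lemma sw_2j: "sw j0 (2*j) = 2 * swg j0 j" "sw j0 (2*j+1) = 2 * swg j0 j + 1"
  unfolding sw_def using d1[of 0 j] d2[of 0 j] d1[of 1 j] d2[of 1 j] by simp_all
lemma sw_lt: "j0 < M \<Longrightarrow> i < 2*M \<Longrightarrow> sw j0 i < 2*M"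
proof -
  assume a: "j0 < M" "i < 2*M"
  have "i div 2 < M" using a(2) by simp
  hence "swg j0 (i div 2) < M" using swg_lt a(1) by blast
  moreover have "i mod 2 < 2" by simp
  ultimately show ?thesis unfolding sw_def by linarith
qed

lemma untouched_sw: "untouched (\<lambda>i. \<sigma> (sw j0 i)) j = untouched \<sigma> (swg j0 j)"
  unfolding untouched_def sw_2j ..

lemma kap_sw: "kap (\<lambda>i. \<sigma> (sw j0 i)) j c0 = kap \<sigma> (swg j0 j) c0"
  unfolding kap_def untouched_sw sw_2j ..

lemma colV_lit_sw: "colV (\<lambda>i. \<sigma> (sw j0 i)) (Inl (i,p)) = colV \<sigma> (Inl (sw j0 i, p))"
  unfolding colV.simps untouched_sw sw_2j sw_div sw_mod ..

lemma card_split: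
  fixes P :: "'a + 'b \<Rightarrow> bool"
  assumes "finite L" "finite C"
  shows "card {x\<in>Inl ` L \<union> Inr ` C. P x} = card {l\<in>L. P (Inl l)} + card {c\<in>C. P (Inr c)}"
proof -
  define A :: "('a + 'b) set" where "A = Inl ` {l\<in>L. P (Inl l)}"
  define B :: "('a + 'b) set" where "B = Inr ` {c\<in>C. P (Inr c)}"
  have "{x\<in>Inl ` L \<union> Inr ` C. P x} = A \<union> B" unfolding A_def B_def by auto
  moreover have "card (A \<union> B) = card A + card B"
    by (rule card_Un_disjoint) (use assms in \<open>auto simp: A_def B_def\<close>)
  moreover have "card A = card {l\<in>L. P (Inl l)}" unfolding A_def by (rule card_image) simp
  moreover have "card B = card {c\<in>C. P (Inr c)}" unfolding B_def by (rule card_image) simp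
  ultimately show ?thesis by simp
qed

lemma finite_cls: "finite (clauses (fam M \<beta>))" using wf_fam unfolding wf_cnf_def by blast

lemma cnt_lits:
  assumes j0: "j0 < M"
  shows "card {l\<in>{..<2*M} \<times> (UNIV::bool set). colV (\<lambda>i. \<sigma> (sw j0 i)) (Inl l) \<in> S} =
         card {l\<in>{..<2*M} \<times> (UNIV::bool set). colV \<sigma> (Inl l) \<in> S}"
proof -
  define swl where "swl = (\<lambda>l::lit. (sw j0 (fst l), snd l))"
  have inv: "swl (swl l) = l" for l by (simp add: swl_def sw_inv)
  have inj: "inj swl" by (metis inv injI)
  have img: "swl ` {l\<in>{..<2*M} \<times> (UNIV::bool set). colV (\<lambda>i. \<sigma> (sw j0 i)) (Inl l) \<in> S} =
         {l\<in>{..<2*M} \<times> (UNIV::bool set). colV \<sigma> (Inl l) \<in> S}"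
  proof (intro set_eqI iffI)
    fix l assume "l \<in> swl ` {l\<in>{..<2*M} \<times> (UNIV::bool set). colV (\<lambda>i. \<sigma> (sw j0 i)) (Inl l) \<in> S}"
    then obtain l' where l': "l = swl l'" "fst l' < 2*M" "colV (\<lambda>i. \<sigma> (sw j0 i)) (Inl l') \<in> S"
      by (auto simp: mem_Times_iff)
    obtain i p where ip: "l' = (i,p)" by (cases l')
    have "colV \<sigma> (Inl l) \<in> S" using l' unfolding ip swl_def colV_lit_sw by simp
    moreover have "fst l < 2*M" using l' sw_lt[OF j0] unfolding ip swl_def by simp
    ultimately show "l \<in> {l\<in>{..<2*M} \<times> (UNIV::bool set). colV \<sigma> (Inl l) \<in> S}"
      by (auto simp: mem_Times_iff)
  next
    fix l assume a: "l \<in> {l\<in>{..<2*M} \<times> (UNIV::bool set). colV \<sigma> (Inl l) \<in> S}"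
    obtain i p where ip: "l = (i,p)" by (cases l)
    have "colV (\<lambda>i. \<sigma> (sw j0 i)) (Inl (swl l)) \<in> S"
      using a unfolding ip swl_def colV_lit_sw by (simp add: sw_inv)
    moreover have "fst (swl l) < 2*M" using a sw_lt[OF j0] unfolding ip swl_def by (auto simp: mem_Times_iff)
    ultimately have "swl l \<in> {l\<in>{..<2*M} \<times> (UNIV::bool set). colV (\<lambda>i. \<sigma> (sw j0 i)) (Inl l) \<in> S}"
      by (auto simp: mem_Times_iff)
    hence "swl (swl l) \<in> swl ` {l\<in>{..<2*M} \<times> (UNIV::bool set). colV (\<lambda>i. \<sigma> (sw j0 i)) (Inl l) \<in> S}"
      by (rule imageI)
    thus "l \<in> swl ` {l\<in>{..<2*M} \<times> (UNIV::bool set). colV (\<lambda>i. \<sigma> (sw j0 i)) (Inl l) \<in> S}"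
      unfolding inv .
  qed
  show ?thesis unfolding img[symmetric] by (rule card_image[symmetric]) (use inj in \<open>simp add: inj_on_def inj_def\<close>)
qed

lemma cnt_cls:
  "card {c\<in>clauses (fam M \<beta>). colV \<sigma> (Inr c) \<in> S} = (\<Sum>j<M. card {c0\<in>gcl \<beta> j. kap \<sigma> j c0 \<in> S})"
proof -
  have eq: "{c\<in>clauses (fam M \<beta>). colV \<sigma> (Inr c) \<in> S} = (\<Union>j\<in>{..<M}. sh j ` {c0\<in>gcl \<beta> j. kap \<sigma> j c0 \<in> S})"
  proof (intro set_eqI iffI)
    fix c assume "c \<in> {c\<in>clauses (fam M \<beta>). colV \<sigma> (Inr c) \<in> S}"
    then obtain j c0 where j: "j < M" "c0 \<in> gcl \<beta> j" "c = sh j c0" and cS: "colV \<sigma> (Inr c) \<in> S"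
      by (auto simp: clauses_fam)
    have "kap \<sigma> j c0 \<in> S" using cS j colV_sh[OF good_gcl[OF j(2)]] by simp
    thus "c \<in> (\<Union>j\<in>{..<M}. sh j ` {c0\<in>gcl \<beta> j. kap \<sigma> j c0 \<in> S})" using j by blast
  next
    fix c assume "c \<in> (\<Union>j\<in>{..<M}. sh j ` {c0\<in>gcl \<beta> j. kap \<sigma> j c0 \<in> S})"
    then obtain j c0 where j: "j < M" "c0 \<in> gcl \<beta> j" "c = sh j c0" and cS: "kap \<sigma> j c0 \<in> S"
      by blast
    have "colV \<sigma> (Inr c) \<in> S" using cS j colV_sh[OF good_gcl[OF j(2)]] by simp
    moreover have "c \<in> clauses (fam M \<beta>)" using j by (auto simp: clauses_fam)
    ultimately show "c \<in> {c\<in>clauses (fam M \<beta>). colV \<sigma> (Inr c) \<in> S}" by blast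
  qed
  have fin: "finite (gcl \<beta> j)" for j by (simp add: gcl_def A0_def B0_def)
  have "card (\<Union>j\<in>{..<M}. sh j ` {c0\<in>gcl \<beta> j. kap \<sigma> j c0 \<in> S}) =
      (\<Sum>j<M. card (sh j ` {c0\<in>gcl \<beta> j. kap \<sigma> j c0 \<in> S}))"
  proof (rule card_UN_disjoint)
    show "finite {..<M}" by simp
    show "\<forall>j\<in>{..<M}. finite (sh j ` {c0\<in>gcl \<beta> j. kap \<sigma> j c0 \<in> S})" using fin by simp
    show "\<forall>j\<in>{..<M}. \<forall>j'\<in>{..<M}. j \<noteq> j' \<longrightarrow>
      sh j ` {c0\<in>gcl \<beta> j. kap \<sigma> j c0 \<in> S} \<inter> sh j' ` {c0\<in>gcl \<beta> j'. kap \<sigma> j' c0 \<in> S} = {}"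
    proof (intro ballI impI)
      fix j j' :: nat assume "j \<noteq> j'"
      show "sh j ` {c0\<in>gcl \<beta> j. kap \<sigma> j c0 \<in> S} \<inter> sh j' ` {c0\<in>gcl \<beta> j'. kap \<sigma> j' c0 \<in> S} = {}"
      proof (rule ccontr)
        assume "\<not> ?thesis"
        then obtain c0 c1 where c: "c0 \<in> gcl \<beta> j" "c1 \<in> gcl \<beta> j'" "sh j c0 = sh j' c1" by blast
        have "gad (sh j c0) = j" by (rule gad_sh[OF good_gcl[OF c(1)]])
        moreover have "gad (sh j' c1) = j'" by (rule gad_sh[OF good_gcl[OF c(2)]])
        ultimately show False using c(3) \<open>j \<noteq> j'\<close> by simp
      qed
    qed
  qed
  also have "\<dots> = (\<Sum>j<M. card {c0\<in>gcl \<beta> j. kap \<sigma> j c0 \<in> S})"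
  proof (rule sum.cong[OF refl])
    fix j :: nat show "card (sh j ` {c0\<in>gcl \<beta> j. kap \<sigma> j c0 \<in> S}) = card {c0\<in>gcl \<beta> j. kap \<sigma> j c0 \<in> S}"
      by (rule card_image) (use inj_sh[of j] in \<open>simp add: inj_on_def inj_def\<close>)
  qed
  finally show ?thesis unfolding eq .
qed

lemma cnt_all:
  assumes j0: "j0 < M" and ut: "untouched \<sigma> j0"
  shows "card {x\<in>VV (fam M (\<lambda>_. False)). colV \<sigma> x \<in> S} =
         card {y\<in>VV (fam M (\<lambda>j. j = 0)). colV (\<lambda>i. \<sigma> (sw j0 i)) y \<in> S}"
proof -
  define \<sigma>' where "\<sigma>' = (\<lambda>i. \<sigma> (sw j0 i))"
  have L: "card {x\<in>VV (fam M \<beta>). colV s x \<in> S} =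
      card {l\<in>{..<2*M} \<times> (UNIV::bool set). colV s (Inl l) \<in> S} + card {c\<in>clauses (fam M \<beta>). colV s (Inr c) \<in> S}"
    for \<beta> s unfolding VV_def nvars_fam by (rule card_split) (simp_all add: finite_cls)
  define g where "g = (\<lambda>j. card {c0\<in>gcl (\<lambda>j. j = 0) (swg j0 j). kap \<sigma> j c0 \<in> S})"
  have "(\<Sum>j<M. card {c0\<in>gcl (\<lambda>j. j = 0) j. kap \<sigma>' j c0 \<in> S}) = (\<Sum>j<M. g (swg j0 j))"
    unfolding g_def \<sigma>'_def kap_sw swg_inv ..
  also have "\<dots> = (\<Sum>j<M. g j)"
  proof (rule sum.reindex_bij_betw)
    show "bij_betw (swg j0) {..<M} {..<M}"
      by (rule bij_betw_byWitness[where f'="swg j0"]) (auto simp: swg_inv swg_lt j0)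
  qed
  also have "\<dots> = (\<Sum>j<M. card {c0\<in>gcl (\<lambda>_. False) j. kap \<sigma> j c0 \<in> S})"
  proof (rule sum.cong[OF refl])
    fix j assume "j \<in> {..<M}"
    show "g j = card {c0\<in>gcl (\<lambda>_. False) j. kap \<sigma> j c0 \<in> S}"
    proof (cases "swg j0 j = 0")
      case False
      thus ?thesis unfolding g_def gcl_def by simp
    next
      case True
      hence "j = j0" using swg_inv[of j0 j] by (simp add: swg_def split: if_splits)
      hence k: "kap \<sigma> j c0 = UC" for c0 using ut by (simp add: kap_def)
      have "{c0\<in>X. kap \<sigma> j c0 \<in> S} = (if UC \<in> S then X else {})" for X using k by auto
      thus ?thesis unfolding g_def gcl_def using True cA0 cB0 by simp
    qed
  qed
  finally have C: "card {c\<in>clauses (fam M (\<lambda>j. j = 0)). colV \<sigma>' (Inr c) \<in> S} =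
       card {c\<in>clauses (fam M (\<lambda>_. False)). colV \<sigma> (Inr c) \<in> S}"
    unfolding cnt_cls .
  show ?thesis unfolding L \<sigma>'_def[symmetric] using C cnt_lits[OF j0, of \<sigma> S] unfolding \<sigma>'_def by simp
qed



lemma card_sh: "good c0 \<Longrightarrow> card (sh j c0) = 2"
proof -
  assume g: "good c0"
  have "card (shl j ` c0) = card c0" by (rule card_image) (metis inj_shl inj_on_subset subset_UNIV)
  thus ?thesis using g unfolding sh_def good_def by simp
qed

lemma is3_fam: "is_3sat (fam M \<beta>)"
  unfolding is_3sat_def
proof (intro conjI ballI)
  show "wf_cnf (fam M \<beta>)" by (rule wf_fam)
  fix c assume "c \<in> clauses (fam M \<beta>)"
  then obtain j c0 where "c0 \<in> gcl \<beta> j" "c = sh j c0" by (auto simp: clauses_fam)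
  thus "card c \<le> 3" using card_sh good_gcl by simp
qed

lemma sat_f: "satisfiable (fam M (\<lambda>_. False))"
  unfolding satisfiable_def satisfies_def
proof (intro exI ballI)
  fix c assume "c \<in> clauses (fam M (\<lambda>_. False))"
  then obtain j c0 where c: "c0 \<in> A0" "c = sh j c0" by (auto simp: clauses_fam gcl_def)
  have "\<exists>l0\<in>c0. snd l0 = True" using c(1) unfolding A0_def by auto
  then obtain l0 where l0: "l0 \<in> c0" "snd l0 = True" by blast
  have "shl j l0 \<in> c" using c l0 unfolding sh_def by blast
  moreover have "snd (shl j l0) = True" using l0 by (simp add: shl_def)
  ultimately show "\<exists>l\<in>c. (\<lambda>_. True) (fst l) = snd l" by force
qed

lemma unsat_f': assumes M: "M > 0" shows "\<not> satisfiable (fam M (\<lambda>j. j = 0))"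
  unfolding satisfiable_def satisfies_def
proof
  assume "\<exists>\<tau>. \<forall>c\<in>clauses (fam M (\<lambda>j. j = 0)). \<exists>l\<in>c. \<tau> (fst l) = snd l"
  then obtain \<tau> where t: "\<forall>c\<in>clauses (fam M (\<lambda>j. j = 0)). \<exists>l\<in>c. \<tau> (fst l) = snd l" by blast
  define c0 where "c0 = {(0::nat, \<not> \<tau> 0), (1, \<not> \<tau> 1)}"
  have "c0 \<in> B0" unfolding c0_def B0_def by (cases "\<tau> 0"; cases "\<tau> 1") auto
  hence "sh 0 c0 \<in> clauses (fam M (\<lambda>j. j = 0))" using M unfolding clauses_fam gcl_def by force
  moreover have "sh 0 c0 = c0" unfolding sh_def shl_def c0_def by simp
  ultimately obtain l where "l \<in> c0" "\<tau> (fst l) = snd l" using t by metis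
  thus False unfolding c0_def by auto
qed

theorem corollary1:
  shows "\<exists>C::real. C > 0 \<and>
    (\<forall>N::nat. N \<ge> 4 \<longrightarrow>
      (\<exists>f f'. is_3sat f \<and> is_3sat f' \<and>
         real (nvars f) \<le> C * real N \<and> real (nvars f') \<le> C * real N \<and>
         satisfiable f \<and> \<not> satisfiable f' \<and>
         (\<forall>\<sigma>. partial_assignment f \<sigma> \<and> card (dom \<sigma>) \<le> N div 2 - 1 \<longrightarrow>
            (\<exists>\<sigma>'. partial_assignment f' \<sigma>' \<and>
                  wl_indist (LCN f \<sigma>) (LCN f' \<sigma>') \<and>
                  \<not> residual_satisfiable f' \<sigma>' \<and>
                  ((\<exists>\<tau>. satisfies \<tau> f \<and> (\<forall>i\<in>dom \<sigma>. \<sigma> i = Some (\<tau> i)))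
                     \<longrightarrow> residual_satisfiable f \<sigma>)))))"
proof (intro exI[of _ 2] conjI allI impI)
  show "(0::real) < 2" by simp
  fix N :: nat assume N4: "N \<ge> 4"
  define f where "f = fam N (\<lambda>_. False)"
  define f' where "f' = fam N (\<lambda>j. j = 0)"
  have unsat: "\<not> satisfiable f'" unfolding f'_def using unsat_f' N4 by simp
  show "\<exists>f f'. is_3sat f \<and> is_3sat f' \<and>
         real (nvars f) \<le> 2 * real N \<and> real (nvars f') \<le> 2 * real N \<and>
         satisfiable f \<and> \<not> satisfiable f' \<and>
         (\<forall>\<sigma>. partial_assignment f \<sigma> \<and> card (dom \<sigma>) \<le> N div 2 - 1 \<longrightarrow>
            (\<exists>\<sigma>'. partial_assignment f' \<sigma>' \<and>
                  wl_indist (LCN f \<sigma>) (LCN f' \<sigma>') \<and>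
                  \<not> residual_satisfiable f' \<sigma>' \<and>
                  ((\<exists>\<tau>. satisfies \<tau> f \<and> (\<forall>i\<in>dom \<sigma>. \<sigma> i = Some (\<tau> i)))
                     \<longrightarrow> residual_satisfiable f \<sigma>)))"
  proof (rule exI[of _ f], rule exI[of _ f'], intro conjI allI impI)
    show "is_3sat f" "is_3sat f'" unfolding f_def f'_def by (rule is3_fam)+
    show "real (nvars f) \<le> 2 * real N" "real (nvars f') \<le> 2 * real N"
      unfolding f_def f'_def nvars_fam by simp_all
    show "satisfiable f" unfolding f_def by (rule sat_f)
    show "\<not> satisfiable f'" by (rule unsat)
    fix \<sigma> assume h: "partial_assignment f \<sigma> \<and> card (dom \<sigma>) \<le> N div 2 - 1"
    have domS: "dom \<sigma> \<subseteq> {..<2*N}" using h unfolding partial_assignment_def f_def nvars_fam by blast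
    have fin: "finite (dom \<sigma>)" using domS finite_subset by blast
    have cardlt: "card (dom \<sigma>) < N" using h N4 by linarith
    have "\<exists>j0<N. untouched \<sigma> j0"
    proof (rule ccontr)
      assume "\<not> ?thesis"
      hence all: "\<And>j. j < N \<Longrightarrow> \<not> untouched \<sigma> j" by blast
      have "{..<N} \<subseteq> (\<lambda>i. i div 2) ` dom \<sigma>"
      proof
        fix j assume "j \<in> {..<N}"
        hence "j < N" by simp
        hence "\<sigma> (2*j) \<noteq> None \<or> \<sigma> (2*j+1) \<noteq> None" using all[of j] unfolding untouched_def by simp
        moreover have "(2*j) div 2 = j" "(2*j+1) div 2 = j" by simp_all
        ultimately show "j \<in> (\<lambda>i. i div 2) ` dom \<sigma>" by (metis domIff imageI)
      qed
      hence "card {..<N} \<le> card ((\<lambda>i. i div 2) ` dom \<sigma>)" using fin by (intro card_mono) auto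
      also have "\<dots> \<le> card (dom \<sigma>)" using fin by (rule card_image_le)
      finally show False using cardlt by simp
    qed
    then obtain j0 where j0: "j0 < N" "untouched \<sigma> j0" by blast
    define \<sigma>' where "\<sigma>' = (\<lambda>i. \<sigma> (sw j0 i))"
    show "\<exists>\<sigma>'. partial_assignment f' \<sigma>' \<and>
                  wl_indist (LCN f \<sigma>) (LCN f' \<sigma>') \<and>
                  \<not> residual_satisfiable f' \<sigma>' \<and>
                  ((\<exists>\<tau>. satisfies \<tau> f \<and> (\<forall>i\<in>dom \<sigma>. \<sigma> i = Some (\<tau> i)))
                     \<longrightarrow> residual_satisfiable f \<sigma>)"
    proof (intro exI[of _ \<sigma>'] conjI impI)
      show "partial_assignment f' \<sigma>'"
        unfolding partial_assignment_def f'_def nvars_fam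
      proof
        fix i assume "i \<in> dom \<sigma>'"
        hence "sw j0 i \<in> dom \<sigma>" unfolding \<sigma>'_def by auto
        hence "sw j0 i < 2*N" using domS by auto
        hence "sw j0 (sw j0 i) < 2*N" using sw_lt[OF j0(1)] by blast
        thus "i \<in> {..<2*N}" unfolding sw_inv by simp
      qed
      show "\<not> residual_satisfiable f' \<sigma>'" using unsat
        unfolding residual_satisfiable_def satisfiable_def by blast
      show "residual_satisfiable f \<sigma>" if "\<exists>\<tau>. satisfies \<tau> f \<and> (\<forall>i\<in>dom \<sigma>. \<sigma> i = Some (\<tau> i))"
        using that unfolding residual_satisfiable_def by blast
      show "wl_indist (LCN f \<sigma>) (LCN f' \<sigma>')"
      proof (rule wl_indist_col[OF LCN_split LCN_split, where \<Lambda> = lblF and colG = "colV \<sigma>"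
            and colH = "colV \<sigma>'" and Nb = Nb])
        show "\<And>x. x \<in> VV f \<Longrightarrow> labL \<sigma> x = lblF (colV \<sigma> x)" by (rule lab_fam)
        show "\<And>x. x \<in> VV f' \<Longrightarrow> labL \<sigma>' x = lblF (colV \<sigma>' x)" by (rule lab_fam)
        show "\<And>x e. x \<in> VV f \<Longrightarrow> image_mset (colV \<sigma>) (mset_set {w \<in> VV f. EE e x w}) = Nb e (colV \<sigma> x)"
          unfolding f_def by (rule nb_fam) simp_all
        show "\<And>x e. x \<in> VV f' \<Longrightarrow> image_mset (colV \<sigma>') (mset_set {w \<in> VV f'. EE e x w}) = Nb e (colV \<sigma>' x)"
          unfolding f'_def
        proof (rule nb_fam)
          fix j :: nat assume "j = 0"
          thus "untouched \<sigma>' j" unfolding \<sigma>'_def untouched_sw using j0(2) by (simp add: swg_def)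
        qed simp
        show "\<And>S. card {x \<in> VV f. colV \<sigma> x \<in> S} = card {y \<in> VV f'. colV \<sigma>' y \<in> S}"
          unfolding f_def f'_def \<sigma>'_def by (rule cnt_all[OF j0])
      qed
    qed
  qed
qed


end
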